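(* Let $m\ge 1$ and $Q\ge 0$ be integers, and let $\mathcal{S}_Q=\{s\in\mathbb{N}^m : s_i\le Q \text{ for all } i=1,\dots,m\}$. For a real matrix $A\in\mathbb{R}^{(m+1)\times m}$ and a state $s\in\mathbb{N}^m$, let $\pi(A)(s)=\mathrm{softmax}(As)\in\mathbb{R}^{m+1}$, where $\mathrm{softmax}(z)_j=e^{z_j}/\sum_{k=1}^{m+1}e^{z_k}$; this is a probability distribution over the $m+1$ actions $\{1,\dots,m+1\}$ (action $i\le m$ means serving queue $i$, action $m+1$ means idling). Let the priority policy $\pi_P$ be the deterministic policy which, at a state $s\in\mathbb{N}^m$ with $s\neq 0$, chooses action $j(s)=\min\{i : s_i>0\}$ with probability one, i.e. $\pi_P(s)=e_{j(s)}$, the $j(s)$-th standard unit vector of $\mathbb{R}^{m+1}$. For $k\ge 0$ define $A_k\in\mathbb{R}^{(m+1)\times m}$ by $(A_k)_{ii}=(Q+1)^{m-i+1}k+1$ for $i=1,\dots,m$ and $(A_k)_{il}=1$ for all other entries (including the whole last row $i=m+1$), and let $\pi_k=\pi(A_k)$. Then: (1) $\pi_0$ is the uniform policy: $\pi_0(s)=\frac{1}{m+1}(1,\dots,1)^\top$ for every $s\in\mathbb{N}^m$. (2) For every $s\in\mathcal{S}_Q$ with $s\neq 0$, $\pi_k(s)\to\pi_P(s)$ as $k\to\infty$. (3) There is no sequence of matrices $A'_k\in\mathbb{R}^{(m+1)\times m}$ with uniformly bounded entries (i.e. $\sup_k\max_{i,l}|(A'_k)_{il}|<\infty$) such that $\pi(A'_k)(s)\to\pi_P(s)$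 as $k\to\infty$ for every $s\in\mathcal{S}_Q$ with $s\neq 0$.
   Context: Setting: a single-server system with $m$ parallel queues; the observable state $s\in\mathbb{N}^m$ records the number of jobs in each queue, and queues are indexed so that $c_1\mu_1\ge c_2\mu_2\ge\dots\ge c_m\mu_m$ (holding cost $c_i$, service rate $\mu_i$), so the priority ($c$-$\mu$) policy serves the lowest-indexed nonempty queue. Policies are parameterized linearly through a softmax as in the claim. *)

theory Defs
  imports Complex_Main
begin

text \<open>Conventions: queues are indexed 1..m, actions 1..m+1 (action m+1 = idle).
  A state s in N^m is a function nat => nat vanishing outside {1..m}.
  A matrix in R^((m+1) x m) is a function nat => nat => real, only entries
  with row in {1..m+1} and column in {1..m} are used.\<close>

definition state_space :: "nat \<Rightarrow> nat \<Rightarrow> (nat \<Rightarrow> nat) set" where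
  "state_space m Q = {s. (\<forall>i\<in>{1..m}. s i \<le> Q) \<and> (\<forall>i. i \<notin> {1..m} \<longrightarrow> s i = 0)}"

definition logit :: "(nat \<Rightarrow> nat \<Rightarrow> real) \<Rightarrow> nat \<Rightarrow> (nat \<Rightarrow> nat) \<Rightarrow> nat \<Rightarrow> real" where
  "logit A m s j = (\<Sum>l=1..m. A j l * real (s l))"

definition softmax_policy :: "(nat \<Rightarrow> nat \<Rightarrow> real) \<Rightarrow> nat \<Rightarrow> (nat \<Rightarrow> nat) \<Rightarrow> nat \<Rightarrow> real" where
  "softmax_policy A m s j = exp (logit A m s j) / (\<Sum>k=1..m+1. exp (logit A m s k))"

definition prio_action :: "nat \<Rightarrow> (nat \<Rightarrow> nat) \<Rightarrow> nat" where
  "prio_action m s = (LEAST i. 1 \<le> i \<and> i \<le> m \<and> 0 < s i)"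

definition priority_policy :: "nat \<Rightarrow> (nat \<Rightarrow> nat) \<Rightarrow> nat \<Rightarrow> real" where
  "priority_policy m s j = (if j = prio_action m s then 1 else 0)"

definition A_seq :: "nat \<Rightarrow> nat \<Rightarrow> nat \<Rightarrow> nat \<Rightarrow> nat \<Rightarrow> real" where
  "A_seq m Q k i l =
     (if i = l \<and> 1 \<le> i \<and> i \<le> m then real ((Q+1) ^ (m - i + 1)) * real k + 1 else 1)"

end

theory Submission
  imports Defs
begin

lemma den_pos: "0 < (\<Sum>k=1..m+1. exp (logit A m s k))"
  by (rule sum_pos) auto

lemma sm_sum: "(\<Sum>j=1..m+1. softmax_policy A m s j) = 1"
  using den_pos[of A m s]
  unfolding softmax_policy_def by (simp add: sum_divide_distrib[symmetric])

lemma sm_nonneg: "0 \<le> softmax_policy A m s j"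
  using den_pos[of A m s] unfolding softmax_policy_def by simp

lemma sm_le:
  assumes "p \<in> {1..m+1}"
  shows "softmax_policy A m s j \<le> exp (logit A m s j - logit A m s p)"
proof -
  have "exp (logit A m s p) \<le> (\<Sum>k=1..m+1. exp (logit A m s k))"
    using assms by (intro member_le_sum) auto
  then have "exp (logit A m s j) / (\<Sum>k=1..m+1. exp (logit A m s k))
      \<le> exp (logit A m s j) / exp (logit A m s p)"
    using den_pos[of A m s] by (intro divide_left_mono) auto
  then show ?thesis unfolding softmax_policy_def using den_pos[of A m s] by (simp add: exp_diff)
qed

lemma logit_A:
  assumes "i \<in> {1..m+1}"
  shows "logit (A_seq m Q k) m s i =
    (if i \<le> m then real k * real ((Q+1)^(m-i+1) * s i) else 0) + (\<Sum>l=1..m. real (s l))"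
proof -
  have "\<And>l. A_seq m Q k i l * real (s l) = real (s l) +
     (if l = i \<and> i \<le> m then real ((Q+1)^(m-i+1)) * real k * real (s l) else 0)"
    using assms by (auto simp: A_seq_def algebra_simps)
  then have "logit (A_seq m Q k) m s i = (\<Sum>l=1..m. real (s l)) +
     (\<Sum>l=1..m. (if l = i \<and> i \<le> m then real ((Q+1)^(m-i+1)) * real k * real (s l) else 0))"
    unfolding logit_def by (simp add: sum.distrib)
  also have "(\<Sum>l=1..m. (if l = i \<and> i \<le> m then real ((Q+1)^(m-i+1)) * real k * real (s l) else 0))
     = (if i \<le> m then real k * real ((Q+1)^(m-i+1) * s i) else 0)"
    using assms by (cases "i \<le> m") (auto simp: sum.delta')
  finally show ?thesis by simp
qed

lemma exp_lin_zero:
  assumes "d > 0"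
  shows "(\<lambda>k. exp (- (real k * d))) \<longlonglongrightarrow> 0"
proof -
  have "(\<lambda>k. exp (-d) ^ k) \<longlonglongrightarrow> 0"
    using assms by (intro LIMSEQ_power_zero) auto
  moreover have "\<And>k. exp (-d) ^ k = exp (- (real k * d))"
    by (simp add: exp_of_nat_mult[symmetric])
  ultimately show ?thesis by simp
qed

theorem theorem2:
  fixes m Q :: nat
  assumes "m \<ge> 1" and "Q \<ge> 1"
  shows "(\<forall>s. (\<forall>i. i \<notin> {1..m} \<longrightarrow> s i = 0) \<longrightarrow>
            (\<forall>j\<in>{1..m+1}. softmax_policy (A_seq m Q 0) m s j = 1 / real (m + 1)))
    \<and> (\<forall>s\<in>state_space m Q. s \<noteq> (\<lambda>_. 0) \<longrightarrow>
         (\<forall>j\<in>{1..m+1}. (\<lambda>k. softmax_policy (A_seq m Q k) m s j) \<longlonglongrightarrow> priority_policy m s j))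
    \<and> \<not> (\<exists>A' :: nat \<Rightarrow> nat \<Rightarrow> nat \<Rightarrow> real.
           (\<exists>B. \<forall>k. \<forall>i\<in>{1..m+1}. \<forall>l\<in>{1..m}. \<bar>A' k i l\<bar> \<le> B)
         \<and> (\<forall>s\<in>state_space m Q. s \<noteq> (\<lambda>_. 0) \<longrightarrow>
              (\<forall>j\<in>{1..m+1}. (\<lambda>k. softmax_policy (A' k) m s j) \<longlonglongrightarrow> priority_policy m s j)))"
proof (intro conjI)
  show "\<forall>s. (\<forall>i. i \<notin> {1..m} \<longrightarrow> s i = 0) \<longrightarrow>
            (\<forall>j\<in>{1..m+1}. softmax_policy (A_seq m Q 0) m s j = 1 / real (m + 1))"
  proof (intro allI impI ballI)
    fix s :: "nat \<Rightarrow> nat" and j assume j: "j \<in> {1..m+1}"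
    have L: "\<And>i. logit (A_seq m Q 0) m s i = (\<Sum>l=1..m. real (s l))"
      unfolding logit_def by (intro sum.cong) (auto simp: A_seq_def)
    show "softmax_policy (A_seq m Q 0) m s j = 1 / real (m + 1)"
      unfolding softmax_policy_def L
      by (simp only: sum_constant card_atLeastAtMost) simp
  qed
next
  show "\<forall>s\<in>state_space m Q. s \<noteq> (\<lambda>_. 0) \<longrightarrow>
         (\<forall>j\<in>{1..m+1}. (\<lambda>k. softmax_policy (A_seq m Q k) m s j) \<longlonglongrightarrow> priority_policy m s j)"
  proof (intro ballI impI)
    fix s j assume s: "s \<in> state_space m Q" and s0: "s \<noteq> (\<lambda>_. 0)" and j: "j \<in> {1..m+1}"
    define p where "p = prio_action m s"
    obtain i0 where "s i0 \<noteq> 0" using s0 by auto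
    then have ex: "1 \<le> i0 \<and> i0 \<le> m \<and> 0 < s i0" using s unfolding state_space_def by auto
    have P: "1 \<le> p \<and> p \<le> m \<and> 0 < s p"
      unfolding p_def prio_action_def by (rule LeastI[of _ i0], rule ex)
    have Pmin: "\<And>i. i < p \<Longrightarrow> 1 \<le> i \<Longrightarrow> s i = 0"
    proof -
      fix i assume "i < p" "1 \<le> i"
      then have "\<not> (1 \<le> i \<and> i \<le> m \<and> 0 < s i)"
        using not_less_Least[of i "\<lambda>i. 1 \<le> i \<and> i \<le> m \<and> 0 < s i"]
        unfolding p_def prio_action_def by blast
      then show "s i = 0" using \<open>i < p\<close> P \<open>1 \<le> i\<close> by auto
    qed
    have sQ: "s i \<le> Q" for i
    proof (cases "i \<in> {1..m}")
      case True then show ?thesis using s unfolding state_space_def by blast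
    next
      case False then have "s i = 0" using s unfolding state_space_def by blast
      then show ?thesis by simp
    qed
    define a :: "nat \<Rightarrow> nat" where "a i = (if i \<le> m then (Q+1)^(m-i+1) * s i else 0)" for i
    have La: "\<And>k i. i \<in> {1..m+1} \<Longrightarrow> logit (A_seq m Q k) m s i = real k * real (a i) + (\<Sum>l=1..m. real (s l))"
      by (simp add: logit_A a_def)
    have gap: "a i < a p" if i: "i \<in> {1..m+1}" "i \<noteq> p" for i
    proof (cases "i < p")
      case True
      then have "a i = 0" using Pmin i a_def by auto
      moreover have "a p > 0" using P a_def by auto
      ultimately show ?thesis by simp
    next
      case False
      then have ip: "i > p" using i by auto
      show ?thesis
      proof (cases "i \<le> m")
        case False
        then have "a i = 0" using a_def by auto
        moreover have "a p > 0" using P a_def by auto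
        ultimately show ?thesis by simp
      next
        case True
        have "a i = (Q+1)^(m-i+1) * s i" using True a_def by simp
        also have "\<dots> \<le> (Q+1)^(m-i+1) * Q" using sQ by simp
        also have "\<dots> < (Q+1)^(m-i+1) * (Q+1)" by simp
        also have "\<dots> = (Q+1)^(m-i+2)" by simp
        also have "\<dots> \<le> (Q+1)^(m-p+1)"
          using ip True by (intro power_increasing) auto
        also have "\<dots> \<le> (Q+1)^(m-p+1) * s p" using P by simp
        also have "\<dots> = a p" using P a_def by simp
        finally show ?thesis .
      qed
    qed
    have pm: "p \<in> {1..m+1}" using P by auto
    have other: "(\<lambda>k. softmax_policy (A_seq m Q k) m s i) \<longlonglongrightarrow> 0"
      if i: "i \<in> {1..m+1}" "i \<noteq> p" for i
    proof (rule tendsto_sandwich[of "\<lambda>_. 0" _ _ "\<lambda>k. exp (- (real k * (real (a p) - real (a i))))"])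
      show "\<forall>\<^sub>F k in sequentially. 0 \<le> softmax_policy (A_seq m Q k) m s i"
        by (simp add: sm_nonneg)
      show "\<forall>\<^sub>F k in sequentially. softmax_policy (A_seq m Q k) m s i
             \<le> exp (- (real k * (real (a p) - real (a i))))"
      proof (rule always_eventually, rule allI)
        fix k
        have "softmax_policy (A_seq m Q k) m s i \<le>
           exp (logit (A_seq m Q k) m s i - logit (A_seq m Q k) m s p)"
          by (rule sm_le[OF pm])
        also have "logit (A_seq m Q k) m s i - logit (A_seq m Q k) m s p
           = - (real k * (real (a p) - real (a i)))"
          using La[OF i(1)] La[OF pm] by (simp add: algebra_simps)
        finally show "softmax_policy (A_seq m Q k) m s i
             \<le> exp (- (real k * (real (a p) - real (a i))))" .
      qed
      show "(\<lambda>k. 0) \<longlonglongrightarrow> (0::real)" by simp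
      show "(\<lambda>k. exp (- (real k * (real (a p) - real (a i))))) \<longlonglongrightarrow> 0"
        using gap[OF i] by (intro exp_lin_zero) simp
    qed
    show "(\<lambda>k. softmax_policy (A_seq m Q k) m s j) \<longlonglongrightarrow> priority_policy m s j"
    proof (cases "j = p")
      case False
      then show ?thesis using other[OF j False] unfolding priority_policy_def p_def by simp
    next
      case True
      have eq: "\<And>k. softmax_policy (A_seq m Q k) m s p =
         1 - (\<Sum>i\<in>{1..m+1}-{p}. softmax_policy (A_seq m Q k) m s i)"
      proof -
        fix k
        have "(\<Sum>j=1..m+1. softmax_policy (A_seq m Q k) m s j) = softmax_policy (A_seq m Q k) m s p
            + (\<Sum>i\<in>{1..m+1}-{p}. softmax_policy (A_seq m Q k) m s i)"
          using pm by (intro sum.remove) auto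
        then show "softmax_policy (A_seq m Q k) m s p =
         1 - (\<Sum>i\<in>{1..m+1}-{p}. softmax_policy (A_seq m Q k) m s i)"
          using sm_sum[of "A_seq m Q k" m s] by linarith
      qed
      have "(\<lambda>k. 1 - (\<Sum>i\<in>{1..m+1}-{p}. softmax_policy (A_seq m Q k) m s i)) \<longlonglongrightarrow> 1 - (\<Sum>i\<in>{1..m+1}-{p}. (0::real))"
        by (intro tendsto_diff tendsto_const tendsto_sum) (use other in auto)
      then have "(\<lambda>k. softmax_policy (A_seq m Q k) m s p) \<longlonglongrightarrow> 1"
        by (simp only: eq) simp
      moreover have "priority_policy m s p = 1" unfolding priority_policy_def p_def by simp
      ultimately show ?thesis using True by simp
    qed
  qed
next
  show "\<not> (\<exists>A' :: nat \<Rightarrow> nat \<Rightarrow> nat \<Rightarrow> real.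
           (\<exists>B. \<forall>k. \<forall>i\<in>{1..m+1}. \<forall>l\<in>{1..m}. \<bar>A' k i l\<bar> \<le> B)
         \<and> (\<forall>s\<in>state_space m Q. s \<noteq> (\<lambda>_. 0) \<longrightarrow>
              (\<forall>j\<in>{1..m+1}. (\<lambda>k. softmax_policy (A' k) m s j) \<longlonglongrightarrow> priority_policy m s j)))"
  proof
    assume "\<exists>A' :: nat \<Rightarrow> nat \<Rightarrow> nat \<Rightarrow> real.
           (\<exists>B. \<forall>k. \<forall>i\<in>{1..m+1}. \<forall>l\<in>{1..m}. \<bar>A' k i l\<bar> \<le> B)
         \<and> (\<forall>s\<in>state_space m Q. s \<noteq> (\<lambda>_. 0) \<longrightarrow>
              (\<forall>j\<in>{1..m+1}. (\<lambda>k. softmax_policy (A' k) m s j) \<longlonglongrightarrow> priority_policy m s j))"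
    then obtain A' B where B: "\<And>k i l. i\<in>{1..m+1} \<Longrightarrow> l\<in>{1..m} \<Longrightarrow> \<bar>A' k i l\<bar> \<le> B"
      and conv: "\<And>s j. s\<in>state_space m Q \<Longrightarrow> s \<noteq> (\<lambda>_. 0) \<Longrightarrow> j\<in>{1..m+1} \<Longrightarrow>
          (\<lambda>k. softmax_policy (A' k) m s j) \<longlonglongrightarrow> priority_policy m s j"
      by blast
    define s0 :: "nat \<Rightarrow> nat" where "s0 i = (if i = 1 then 1 else 0)" for i
    have s0S: "s0 \<in> state_space m Q" using assms unfolding state_space_def s0_def by auto
    have s0nz: "s0 \<noteq> (\<lambda>_. 0)" 
    proof
      assume "s0 = (\<lambda>_. 0)"
      then have "s0 1 = 0" by simp
      then show False by (simp add: s0_def)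
    qed
    have pa: "prio_action m s0 = 1"
      unfolding prio_action_def using assms by (intro Least_equality) (auto simp: s0_def)
    have lim: "(\<lambda>k. softmax_policy (A' k) m s0 (m+1)) \<longlonglongrightarrow> 0"
      using conv[OF s0S s0nz, of "m+1"] pa assms unfolding priority_policy_def by simp
    have Lg: "logit (A' k) m s0 i = A' k i 1" for k i
    proof -
      have "logit (A' k) m s0 i = (\<Sum>l=1..m. if l = 1 then A' k i l else 0)"
        unfolding logit_def s0_def by (intro sum.cong) auto
      also have "\<dots> = A' k i 1" using assms by (simp add: sum.delta)
      finally show ?thesis .
    qed
    have lb: "exp (-B) / (real (m+1) * exp B) \<le> softmax_policy (A' k) m s0 (m+1)" for k
    proof -
      have b: "\<And>i. i \<in> {1..m+1} \<Longrightarrow> \<bar>logit (A' k) m s0 i\<bar> \<le> B"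
        unfolding Lg using B assms by auto
      have "(\<Sum>i=1..m+1. exp (logit (A' k) m s0 i)) \<le> (\<Sum>i=1..m+1. exp B)"
        using b by (intro sum_mono) (simp add: abs_le_iff)
      then have den: "(\<Sum>i=1..m+1. exp (logit (A' k) m s0 i)) \<le> real (m+1) * exp B" by simp
      have num: "exp (-B) \<le> exp (logit (A' k) m s0 (m+1))"
        using b[of "m+1"] by (simp add: abs_le_iff)
      have "exp (-B) / (real (m+1) * exp B) \<le> exp (logit (A' k) m s0 (m+1)) / (real (m+1) * exp B)"
        using num by (intro divide_right_mono) auto
      also have "\<dots> \<le> exp (logit (A' k) m s0 (m+1)) / (\<Sum>i=1..m+1. exp (logit (A' k) m s0 i))"
        using den den_pos[of "A' k" m s0] by (intro divide_left_mono) auto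
      finally show ?thesis unfolding softmax_policy_def .
    qed
    have "exp (-B) / (real (m+1) * exp B) \<le> 0"
      using lim by (rule LIMSEQ_le_const) (use lb in auto)
    moreover have "exp (-B) / (real (m+1) * exp B) > 0"
      by (intro divide_pos_pos mult_pos_pos) auto
    ultimately show False by linarith
  qed
qed

end
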